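(* Let $0<\mu<1$, $\bar\mu=1-\mu$, $\boldsymbol\mu=(\bar\mu,\mu)'$, and let $\lambda\in(-1,1)$ be such that the matrix $M(\lambda,\boldsymbol\mu)=\lambda I+(1-\lambda)\mathbf 1\boldsymbol\mu'$ has nonnegative entries. Let $(Y_k)$ be the Markov chain on $\{0,1\}$ with transition matrix $M(\lambda,\boldsymbol\mu)$ started from its stationary distribution $\boldsymbol\mu$ (so $\mathbb{P}(Y_k=1)=\mu$), and let $S_n=\sum_{k=1}^nY_k$. Let $D_t=\mathrm{diag}(1,e^{t/2})$, $\gamma_1=(\sqrt{\bar\mu},\sqrt{\mu})'$, $G_t=D_t[\gamma_1\gamma_1'+\lambda(I-\gamma_1\gamma_1')]D_t$, and let $\theta(t)$ be the largest eigenvalue of $G_t$. Then for all $\varepsilon>0$ with $\mu+\varepsilon<1$, all $n\ge1$ and all $t\ge0$, $$\mathbb{P}_{\boldsymbol\mu}[S_n\ge n(\mu+\varepsilon)]\le\|D_t\gamma_1\|^2\,\theta(t)^{-1}\exp\{-n[t(\mu+\varepsilon)-\log\theta(t)]\}.$$ If moreover $0\le\lambda<1$, then $$\mathbb{P}_{\boldsymbol\mu}[S_n\ge n(\mu+\varepsilon)]\le\left[\frac{\mu+\bar\mu\lambda}{1-2(\bar\mu-\varepsilon)/(\sqrt\Delta+1)}\right]^{n(\mu+\varepsilon)}\left[\frac{\bar\mu+\mu\lambda}{1-2(\mu+\varepsilon)/(\sqrt\Delta+1)}\right]^{n(\bar\mu-\varepsilon)}\le\exp\Big[-2\,\frac{1-\lambda}{1+\lambda}\,n\varepsilon^2\Big],$$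 where $\Delta=1+\dfrac{4\lambda(\mu+\varepsilon)(\bar\mu-\varepsilon)}{\mu\bar\mu(1-\lambda)^2}$.
   Context: $I$ is the $2\times2$ identity matrix and $\mathbf 1=(1,1)'$; states are ordered $(0,1)$. $M(\lambda,\boldsymbol\mu)$ is the transition matrix of the two-state chain with stationary distribution $\boldsymbol\mu$ and second eigenvalue $\lambda$. $\|\cdot\|$ is the Euclidean norm. *)

theory Defs
  imports "HOL-Analysis.Analysis"
begin

text \<open>States are ordered (0,1): state 0 corresponds to index 1 and state 1 to index 2
  of vectors/matrices of type real^2 and real^2^2.\<close>

definition st_idx :: "nat \<Rightarrow> 2" where
  "st_idx a = (if a = 0 then 1 else 2)"

definition mu_vec :: "real \<Rightarrow> real^2" where
  "mu_vec \<mu> = vector [1 - \<mu>, \<mu>]"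

definition Mmat :: "real \<Rightarrow> real \<Rightarrow> real^2^2" where
  "Mmat lam \<mu> = lam *\<^sub>R mat 1 + (1 - lam) *\<^sub>R (\<chi> i j. mu_vec \<mu> $ j)"

fun path_prob :: "real \<Rightarrow> real \<Rightarrow> nat list \<Rightarrow> real" where
  "path_prob lam \<mu> [] = 1"
| "path_prob lam \<mu> (y # ys) =
     mu_vec \<mu> $ st_idx y *
     (\<Prod>k < length ys. Mmat lam \<mu> $ st_idx ((y # ys) ! k) $ st_idx ((y # ys) ! Suc k))"

definition prob_Sn_ge :: "real \<Rightarrow> real \<Rightarrow> nat \<Rightarrow> real \<Rightarrow> real" where
  "prob_Sn_ge lam \<mu> n c =
     (\<Sum>ys \<in> {ys. length ys = n \<and> set ys \<subseteq> {0, 1} \<and> real (sum_list ys) \<ge> c}.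
        path_prob lam \<mu> ys)"

definition Dmat :: "real \<Rightarrow> real^2^2" where
  "Dmat t = (\<chi> i j. if i = j then (if i = 1 then 1 else exp (t / 2)) else 0)"

definition gamma1 :: "real \<Rightarrow> real^2" where
  "gamma1 \<mu> = vector [sqrt (1 - \<mu>), sqrt \<mu>]"

definition Gmat :: "real \<Rightarrow> real \<Rightarrow> real \<Rightarrow> real^2^2" where
  "Gmat lam \<mu> t =
     (let P = (\<chi> i j. gamma1 \<mu> $ i * gamma1 \<mu> $ j)
      in Dmat t ** (P + lam *\<^sub>R (mat 1 - P)) ** Dmat t)"

definition largest_eigenvalue :: "real^2^2 \<Rightarrow> real" where
  "largest_eigenvalue A = Max {x. \<exists>v. v \<noteq> 0 \<and> A *v v = x *\<^sub>R v}"

definition theta :: "real \<Rightarrow> real \<Rightarrow> real \<Rightarrow> real" where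
  "theta lam \<mu> t = largest_eigenvalue (Gmat lam \<mu> t)"

end

theory Submission
  imports Defs "HOL-Probability.Hoeffding"
begin

lemma eig2:
  fixes A :: "real^2^2"
  assumes "A$1$1 = a" "A$1$2 = g" "A$2$1 = g" "A$2$2 = b"
  shows "largest_eigenvalue A = (a + b + sqrt ((a-b)^2 + 4*g^2)) / 2"
proof -
  define T where "T = (a + b + sqrt ((a-b)^2 + 4*g^2)) / 2"
  define T' where "T' = (a + b - sqrt ((a-b)^2 + 4*g^2)) / 2"
  let ?E = "{x. \<exists>v. v \<noteq> 0 \<and> A *v v = x *\<^sub>R v}"
  have sq: "(sqrt ((a-b)^2 + 4*g^2))^2 = (a-b)^2 + 4*g^2" by simp
  have char: "(a - x) * (b - x) = g^2" if "x \<in> ?E" for x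
  proof -
    from that obtain v where v: "v \<noteq> 0" "A *v v = x *\<^sub>R v" by auto
    have e1: "a * v$1 + g * v$2 = x * v$1" and e2: "g * v$1 + b * v$2 = x * v$2"
      using v(2) assms unfolding vec_eq_iff by (auto simp: matrix_vector_mult_def sum_2 forall_2)
    have "v$1 \<noteq> 0 \<or> v$2 \<noteq> 0" using v(1) by (auto simp: vec_eq_iff forall_2)
    moreover have "((a - x) * (b - x) - g^2) * v$1 = 0" using e1 e2
      by (simp add: algebra_simps power2_eq_square) (smt (verit) mult.commute mult.left_commute ring_class.ring_distribs(1))
    moreover have "((a - x) * (b - x) - g^2) * v$2 = 0" using e1 e2
      by (simp add: algebra_simps power2_eq_square) (smt (verit) mult.commute mult.left_commute ring_class.ring_distribs(1))
    ultimately show ?thesis by auto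
  qed
  have roots: "x = T \<or> x = T'" if "(a - x) * (b - x) = g^2" for x
  proof -
    have "(2*x - (a+b))^2 = (sqrt ((a-b)^2 + 4*g^2))^2"
      using that sq by (simp add: power2_eq_square algebra_simps)
    then have "2*x - (a+b) = sqrt ((a-b)^2 + 4*g^2) \<or> 2*x - (a+b) = - sqrt ((a-b)^2 + 4*g^2)"
      using power2_eq_iff by blast
    then show ?thesis unfolding T_def T'_def by auto
  qed
  have TT': "T' \<le> T" unfolding T_def T'_def by simp
  have Troot: "(a - T) * (b - T) = g^2"
  proof -
    have "(a - T) * (b - T) = ((sqrt ((a-b)^2 + 4*g^2))^2 - (a-b)^2)/4"
      unfolding T_def by (simp add: field_simps power2_eq_square)
    then show ?thesis using sq by simp
  qed
  have "T \<in> ?E"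
  proof (cases "g = 0 \<and> T = a")
    case True
    define v :: "real^2" where "v = vector [1, 0]"
    have "v \<noteq> 0" unfolding v_def by (auto simp: vec_eq_iff forall_2)
    moreover have "A *v v = T *\<^sub>R v" using True assms
      unfolding v_def by (auto simp: vec_eq_iff forall_2 matrix_vector_mult_def sum_2)
    ultimately show ?thesis by auto
  next
    case False
    define v :: "real^2" where "v = vector [g, T - a]"
    have "v \<noteq> 0" using False unfolding v_def by (auto simp: vec_eq_iff forall_2)
    moreover have "A *v v = T *\<^sub>R v" using assms Troot
      unfolding v_def by (auto simp: vec_eq_iff forall_2 matrix_vector_mult_def sum_2 algebra_simps power2_eq_square)
    ultimately show ?thesis by auto
  qed
  moreover have "finite ?E"
    by (rule finite_subset[of _ "{T, T'}"]) (use char roots in auto)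
  moreover have "\<forall>x\<in>?E. x \<le> T" using char roots TT' by blast
  ultimately have "Max ?E = T" by (intro Max_eqI) auto
  then show ?thesis unfolding largest_eigenvalue_def T_def by simp
qed


lemma gmat_entries:
  assumes "0 \<le> \<mu>" "\<mu> \<le> 1"
  shows "Gmat lam \<mu> t $1$1 = 1 - \<mu> + lam * \<mu>"
    and "Gmat lam \<mu> t $1$2 = (1 - lam) * sqrt (1-\<mu>) * sqrt \<mu> * exp (t/2)"
    and "Gmat lam \<mu> t $2$1 = (1 - lam) * sqrt (1-\<mu>) * sqrt \<mu> * exp (t/2)"
    and "Gmat lam \<mu> t $2$2 = exp t * (\<mu> + lam * (1 - \<mu>))"
proof -
  have e: "exp (t/2) * exp (t/2) = exp t" by (simp flip: exp_add)
  show "Gmat lam \<mu> t $1$1 = 1 - \<mu> + lam * \<mu>"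
    "Gmat lam \<mu> t $1$2 = (1 - lam) * sqrt (1-\<mu>) * sqrt \<mu> * exp (t/2)"
    "Gmat lam \<mu> t $2$1 = (1 - lam) * sqrt (1-\<mu>) * sqrt \<mu> * exp (t/2)"
    "Gmat lam \<mu> t $2$2 = exp t * (\<mu> + lam * (1 - \<mu>))"
    using assms e
    by (simp_all add: Gmat_def Dmat_def gamma1_def matrix_matrix_mult_def sum_2 mat_def algebra_simps)
qed


definition rt :: "real \<Rightarrow> real \<Rightarrow> real" where
  "rt S L = (S + sqrt (S^2 - 4*L)) / 2"

lemma rt_root: assumes "S^2 - 4*L \<ge> 0" shows "(rt S L)^2 - S * rt S L + L = 0"
proof -
  have "(sqrt (S^2 - 4*L))^2 = S^2 - 4*L" using assms by simp
  then show ?thesis unfolding rt_def by (simp add: field_simps power2_eq_square)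
qed

lemma rt_upper: assumes "c^2 - S*c + L \<le> 0" shows "c \<le> rt S L"
proof -
  have "(2*c - S)^2 \<le> S^2 - 4*L" using assms by (simp add: power2_eq_square algebra_simps)
  then have "\<bar>2*c - S\<bar> \<le> sqrt (S^2 - 4*L)" using real_le_rsqrt by (metis abs_le_square_iff real_sqrt_abs real_sqrt_le_mono)
  then have "2*c \<le> S + sqrt (S^2 - 4*L)" using abs_ge_self[of "2*c-S"] by linarith
  then show ?thesis unfolding rt_def by (simp add: field_simps)
qed

lemma rt_lower: assumes "w^2 - S*w + L \<ge> 0" "2*w \<ge> S" shows "rt S L \<le> w"
proof -
  have "S^2 - 4*L \<le> (2*w - S)^2" using assms by (simp add: power2_eq_square algebra_simps)
  then have "sqrt (S^2 - 4*L) \<le> sqrt ((2*w - S)^2)" by (rule real_sqrt_le_mono)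
  then have "sqrt (S^2 - 4*L) \<le> 2*w - S" using assms(2) by simp
  then have "S + sqrt (S^2 - 4*L) \<le> 2*w" by linarith
  then show ?thesis unfolding rt_def by (simp add: field_simps)
qed

lemma amgm_powr: fixes y a :: real assumes "y > 0" "0 \<le> a" "a \<le> 1"
  shows "y powr a \<le> a * y + (1 - a)"
proof -
  have "exp ((1 - a) *\<^sub>R 0 + a *\<^sub>R ln y) \<le> (1 - a) * exp 0 + a * exp (ln y)"
    using convex_onD[OF exp_convex, of a 0 "ln y"] assms by simp
  then show ?thesis using assms by (simp add: powr_def)
qed

lemma key_cosh:
  fixes lam \<mu> x :: real
  assumes "0 \<le> lam" "lam < 1" "0 < \<mu>" "\<mu> < 1" "0 \<le> x"
  defines "c \<equiv> (1 - lam) / (1 + lam)"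
  defines "m \<equiv> x^2 / (2*c) + (2*\<mu> - 1) * x"
  shows "(1 - \<mu> + lam*\<mu>) * exp (-x) + (\<mu> + lam*(1-\<mu>)) * exp x \<le> exp m + lam * exp (-m)"
    and "lam \<le> exp (2*m)"
proof -
  have c0: "c > 0" "c \<le> 1" unfolding c_def using assms(1-5) by (auto simp: field_simps)
  define \<tau> where "\<tau> = lam / (1 + lam)"
  have tau: "0 \<le> \<tau>" "\<tau> \<le> 1" unfolding \<tau>_def using assms(1-5) by auto
  have J0: "exp ((1 - \<tau>) *\<^sub>R m + \<tau> *\<^sub>R (-m)) \<le> (1 - \<tau>) * exp m + \<tau> * exp (-m)"
    using convex_onD[OF exp_convex, of \<tau> m "-m"] tau by simp
  have "1 - 2*\<tau> = c" unfolding \<tau>_def c_def using assms(1-5) by (simp add: field_simps)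
  moreover have "(1 - \<tau>) *\<^sub>R m + \<tau> *\<^sub>R (-m) = (1 - 2*\<tau>) * m" by (simp add: algebra_simps)
  ultimately have "(1 - \<tau>) *\<^sub>R m + \<tau> *\<^sub>R (-m) = c * m" by simp
  with J0 have J1: "exp (c*m) \<le> (1 - \<tau>) * exp m + \<tau> * exp (-m)" by simp
  have J: "(1 + lam) * exp (c*m) \<le> exp m + lam * exp (-m)"
  proof -
    have "(1 + lam) * exp (c*m) \<le> (1 + lam) * ((1 - \<tau>) * exp m + \<tau> * exp (-m))"
      using J1 assms by (intro mult_left_mono) auto
    also have "\<dots> = ((1 + lam) * (1 - \<tau>)) * exp m + ((1 + lam) * \<tau>) * exp (-m)"
      by (simp add: algebra_simps)
    also have "(1 + lam) * (1 - \<tau>) = 1" unfolding \<tau>_def using assms(1-5) by (simp add: field_simps)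
    also have "(1 + lam) * \<tau> = lam" unfolding \<tau>_def using assms(1-5) by (simp add: field_simps)
    finally show ?thesis by simp
  qed
  define pr where "pr = (\<mu> + lam*(1-\<mu>)) / (1 + lam)"
  have pi0: "pr \<ge> 0" unfolding pr_def using assms(1-5) by auto
  have H0: "-(2*x) * pr + ln (1 + pr * (exp (2*x) - 1)) \<le> (2*x)^2 / 8"
    using Hoeffdings_lemma_aux[of "2*x" pr] assms pi0 by simp
  have pos: "1 + pr * (exp (2*x) - 1) > 0" using pi0 assms by (intro add_pos_nonneg) auto
  have H1: "1 + pr * (exp (2*x) - 1) \<le> exp (2*x*pr + x^2/2)"
  proof -
    have "ln (1 + pr * (exp (2*x) - 1)) \<le> 2*x*pr + x^2/2" using H0 by (simp add: power2_eq_square)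
    then show ?thesis using pos by (metis exp_ln exp_le_cancel_iff)
  qed
  have e2: "exp (2*x) = exp x * exp x" by (simp flip: exp_add)
  have "(1 - \<mu> + lam*\<mu>) * exp (-x) + (\<mu> + lam*(1-\<mu>)) * exp x
        = (1 + lam) * exp (-x) * (1 + pr * (exp (2*x) - 1))"
  proof -
    have q1: "(1 + lam) * pr = \<mu> + lam*(1-\<mu>)" unfolding pr_def using assms(1-5) by simp
    have ee: "exp (2*x) * exp (-x) = exp x" by (simp flip: exp_add)
    have "(1 + lam) * exp (-x) * (1 + pr * (exp (2*x) - 1))
          = (1 + lam) * exp (-x) + ((1 + lam) * pr) * (exp (2*x) * exp (-x) - exp (-x))"
      by (simp add: algebra_simps)
    also have "\<dots> = (1 + lam) * exp (-x) + (\<mu> + lam*(1-\<mu>)) * (exp x - exp (-x))"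
      by (simp only: q1 ee)
    finally show ?thesis by (simp add: algebra_simps)
  qed
  also have "\<dots> \<le> (1 + lam) * exp (-x) * exp (2*x*pr + x^2/2)"
    using H1 assms by (intro mult_left_mono) auto
  also have "\<dots> = (1 + lam) * exp (c*m)"
  proof -
    have l1: "1 + lam > 0" using assms(1) by simp
    have h1: "2*pr - 1 = c*(2*\<mu>-1)" unfolding pr_def c_def using l1 by (simp add: field_simps)
    have h2: "c*m = x^2/2 + c*(2*\<mu>-1)*x" unfolding m_def using c0 by (simp add: field_simps)
    have "-x + (2*x*pr + x^2/2) = x^2/2 + (2*pr - 1)*x" by (simp add: algebra_simps)
    also have "\<dots> = c*m" by (simp only: h1 h2)
    finally have hh: "-x + (2*x*pr + x^2/2) = c*m" .
    have "exp (-x) * exp (2*x*pr + x^2/2) = exp (c*m)" by (metis hh exp_add)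
    then show ?thesis by (simp only: mult.assoc)
  qed
  also have "\<dots> \<le> exp m + lam * exp (-m)" by (rule J)
  finally show "(1 - \<mu> + lam*\<mu>) * exp (-x) + (\<mu> + lam*(1-\<mu>)) * exp x \<le> exp m + lam * exp (-m)" .
  show "lam \<le> exp (2*m)"
  proof -
    define d where "d = 2*\<mu> - 1"
    have m2: "2*m = x^2/c + 2*d*x" unfolding m_def d_def using c0 by (simp add: field_simps)
    have sq: "x^2/c + 2*d*x + c*d^2 = (x + c*d)^2 / c" using c0 by (simp add: field_simps power2_eq_square)
    have "(x + c*d)^2 / c \<ge> 0" using c0 by simp
    have d1: "d^2 \<le> 1"
    proof -
      have "d^2 = 1 - 4*(\<mu>*(1-\<mu>))" unfolding d_def by (simp add: power2_eq_square algebra_simps)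
      moreover have "\<mu>*(1-\<mu>) \<ge> 0" using assms(3,4) by simp
      ultimately show ?thesis by linarith
    qed
    have "c*d^2 \<le> c" using mult_left_le[of "d^2" c] c0 d1 by simp
    moreover have "c \<le> 1 - lam" unfolding c_def using assms(1-5) mult_left_le[of lam lam] by (simp add: field_simps)
    ultimately have "2*m \<ge> lam - 1" using m2 sq \<open>(x + c*d)^2 / c \<ge> 0\<close> by linarith
    then have "exp (lam - 1) \<le> exp (2*m)" by simp
    moreover have "lam \<le> exp (lam - 1)" using exp_ge_add_one_self[of "lam - 1"] by simp
    ultimately show ?thesis by linarith
  qed
qed


lemma norm_step:
  fixes a b g x y :: real
  assumes "0 \<le> a + b" "0 \<le> g"
  defines "T \<equiv> (a + b + sqrt ((a-b)^2 + 4*g^2)) / 2"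
  shows "(a*x + g*y)^2 + (g*x + b*y)^2 \<le> T^2 * (x^2 + y^2)"
proof -
  define sd where "sd = sqrt ((a-b)^2 + 4*g^2)"
  have sd2: "sd^2 = (a-b)^2 + 4*g^2" unfolding sd_def by simp
  have sdge: "\<bar>a - b\<bar> \<le> sd"
  proof -
    have "sqrt ((a-b)^2) \<le> sd" unfolding sd_def by (rule real_sqrt_le_mono) simp
    then show ?thesis by simp
  qed
  have T: "T = (a + b + sd)/2" unfolding T_def sd_def ..
  define A where "A = T - a"
  define B where "B = T - b"
  have A0: "A \<ge> 0" unfolding A_def T using sdge by (simp add: abs_le_iff)
  have B0: "B \<ge> 0" unfolding B_def T using sdge by (simp add: abs_le_iff)
  have AB: "A * B = g^2"
  proof -
    have "A * B = (sd^2 - (a-b)^2)/4" unfolding A_def B_def T by (simp add: field_simps power2_eq_square)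
    then show ?thesis using sd2 by simp
  qed
  define \<alpha> where "\<alpha> = sqrt A"
  define \<beta> where "\<beta> = sqrt B"
  have ha: "a = T - \<alpha>^2" unfolding \<alpha>_def A_def using A0 A_def by simp
  have hb: "b = T - \<beta>^2" unfolding \<beta>_def B_def using B0 B_def by simp
  have hg: "g = \<alpha> * \<beta>" unfolding \<alpha>_def \<beta>_def using AB assms(2)
    by (metis real_sqrt_mult real_sqrt_unique)
  have "T^2 * (x^2 + y^2) - ((a*x + g*y)^2 + (g*x + b*y)^2) = (\<alpha>*x - \<beta>*y)^2 * (a + b)"
    unfolding ha hb hg by (simp add: power2_eq_square algebra_simps)
  moreover have "(\<alpha>*x - \<beta>*y)^2 * (a + b) \<ge> 0" using assms(1) by simp
  ultimately show ?thesis by linarith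
qed

lemma cs2: fixes w0 w1 v0 v1 :: real
  shows "(w0 * v0 + w1 * v1)^2 \<le> (w0^2 + w1^2) * (v0^2 + v1^2)"
proof -
  have "(w0^2 + w1^2) * (v0^2 + v1^2) - (w0 * v0 + w1 * v1)^2 = (w0 * v1 - w1 * v0)^2"
    by (simp add: power2_eq_square algebra_simps)
  moreover have "(w0 * v1 - w1 * v0)^2 \<ge> 0" by simp
  ultimately show ?thesis by linarith
qed

definition pp :: "real \<Rightarrow> real \<Rightarrow> real" where "pp lam \<mu> = 1 - \<mu> + lam * \<mu>"
definition qq :: "real \<Rightarrow> real \<Rightarrow> real" where "qq lam \<mu> = \<mu> + lam * (1 - \<mu>)"

lemma pq_lam: "pp lam \<mu> * qq lam \<mu> - lam = (1 - lam)^2 * \<mu> * (1 - \<mu>)"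
  unfolding pp_def qq_def by (simp add: power2_eq_square algebra_simps)

lemma theta_eq:
  assumes "0 \<le> \<mu>" "\<mu> \<le> 1"
  shows "theta lam \<mu> t = rt (pp lam \<mu> + qq lam \<mu> * exp t) (lam * exp t)"
proof -
  let ?g = "(1 - lam) * sqrt (1-\<mu>) * sqrt \<mu> * exp (t/2)"
  have th: "theta lam \<mu> t = (pp lam \<mu> + exp t * qq lam \<mu> + sqrt ((pp lam \<mu> - exp t * qq lam \<mu>)^2 + 4*?g^2)) / 2"
    unfolding theta_def pp_def qq_def by (rule eig2) (use gmat_entries[OF assms] in auto)
  have g2: "?g^2 = (1 - lam)^2 * \<mu> * (1 - \<mu>) * exp t"
  proof -
    have "exp (t/2)^2 = exp t" by (simp add: power2_eq_square flip: exp_add)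
    then show ?thesis using assms by (simp add: power_mult_distrib)
  qed
  have "(pp lam \<mu> - exp t * qq lam \<mu>)^2 + 4*?g^2 = (pp lam \<mu> + qq lam \<mu> * exp t)^2 - 4 * (lam * exp t)"
    unfolding g2 pq_lam[symmetric] by (simp add: power2_eq_square algebra_simps)
  then show ?thesis unfolding th rt_def by (simp add: mult.commute)
qed


fun trp :: "real \<Rightarrow> real \<Rightarrow> nat \<Rightarrow> nat list \<Rightarrow> real" where
  "trp lam \<mu> y [] = 1"
| "trp lam \<mu> y (z # zs) = Mmat lam \<mu> $ st_idx y $ st_idx z * trp lam \<mu> z zs"

lemma prod_trp:
  "(\<Prod>k < length ys. Mmat lam \<mu> $ st_idx ((y # ys) ! k) $ st_idx ((y # ys) ! Suc k)) = trp lam \<mu> y ys"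
proof (induction ys arbitrary: y)
  case Nil
  then show ?case by simp
next
  case (Cons z zs)
  have "(\<Prod>k < length (z # zs). Mmat lam \<mu> $ st_idx ((y # z # zs) ! k) $ st_idx ((y # z # zs) ! Suc k))
      = Mmat lam \<mu> $ st_idx y $ st_idx z *
        (\<Prod>k < length zs. Mmat lam \<mu> $ st_idx ((z # zs) ! k) $ st_idx ((z # zs) ! Suc k))"
    by (simp only: length_Cons prod.lessThan_Suc_shift nth_Cons_Suc nth_Cons_0)
  then show ?case using Cons by simp
qed

lemma path_prob_Cons: "path_prob lam \<mu> (y # ys) = mu_vec \<mu> $ st_idx y * trp lam \<mu> y ys"
  by (simp only: path_prob.simps prod_trp)

definition Ls :: "nat \<Rightarrow> nat list set" where
  "Ls m = {xs. set xs \<subseteq> {0,1} \<and> length xs = m}"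

lemma finite_Ls: "finite (Ls m)"
  unfolding Ls_def by (rule finite_lists_length_eq) simp

lemma Ls_Suc: "Ls (Suc m) = (\<lambda>(xs, n). n # xs) ` (Ls m \<times> {0,1})"
  unfolding Ls_def by (rule lists_length_Suc_eq)

lemma sum_Ls_Suc:
  fixes f :: "nat list \<Rightarrow> real"
  shows "(\<Sum>ys \<in> Ls (Suc m). f ys) = (\<Sum>z \<in> {0,1}. \<Sum>zs \<in> Ls m. f (z # zs))"
proof -
  have inj: "inj_on (\<lambda>(xs, n). n # xs) (Ls m \<times> {0::nat,1})"
    by (auto simp: inj_on_def)
  have "(\<Sum>ys \<in> Ls (Suc m). f ys) = (\<Sum>p \<in> Ls m \<times> {0,1}. f (snd p # fst p))"
    unfolding Ls_Suc by (subst sum.reindex[OF inj]) (simp add: case_prod_beta)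
  also have "\<dots> = (\<Sum>(zs,z) \<in> Ls m \<times> {0,1}. f (z # zs))"
    by (simp add: split_def)
  also have "\<dots> = (\<Sum>zs \<in> Ls m. \<Sum>z \<in> {0,1}. f (z # zs))"
    by (rule sum.cartesian_product[symmetric])
  also have "\<dots> = (\<Sum>z \<in> {0,1}. \<Sum>zs \<in> Ls m. f (z # zs))"
    by (rule sum.swap)
  finally show ?thesis .
qed

definition Ff :: "real \<Rightarrow> real \<Rightarrow> real \<Rightarrow> nat \<Rightarrow> nat \<Rightarrow> real" where
  "Ff lam \<mu> u m y = (\<Sum>zs \<in> Ls m. trp lam \<mu> y zs * u ^ sum_list zs)"

lemma Ls_0: "Ls 0 = {[]}" by (auto simp: Ls_def)

lemma Ff_0: "Ff lam \<mu> u 0 y = 1"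
  by (simp add: Ff_def Ls_0)

lemma Ff_Suc: "Ff lam \<mu> u (Suc m) y =
   (\<Sum>z \<in> {0,1}. Mmat lam \<mu> $ st_idx y $ st_idx z * u ^ z * Ff lam \<mu> u m z)"
  unfolding Ff_def sum_Ls_Suc
  by (simp add: sum_distrib_left power_add mult_ac)

lemma Z_Suc: "(\<Sum>ys \<in> Ls (Suc m). path_prob lam \<mu> ys * u ^ sum_list ys) =
   (\<Sum>y \<in> {0,1}. mu_vec \<mu> $ st_idx y * u ^ y * Ff lam \<mu> u m y)"
  unfolding Ff_def sum_Ls_Suc
  by (simp del: path_prob.simps add: path_prob_Cons sum_distrib_left power_add mult_ac)

lemma Mmat_entries:
  "Mmat lam \<mu> $ st_idx 0 $ st_idx 0 = 1 - \<mu> + lam * \<mu>"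
  "Mmat lam \<mu> $ st_idx 0 $ st_idx 1 = (1 - lam) * \<mu>"
  "Mmat lam \<mu> $ st_idx 1 $ st_idx 0 = (1 - lam) * (1 - \<mu>)"
  "Mmat lam \<mu> $ st_idx 1 $ st_idx 1 = \<mu> + lam * (1 - \<mu>)"
  "mu_vec \<mu> $ st_idx 0 = 1 - \<mu>"
  "mu_vec \<mu> $ st_idx 1 = \<mu>"
  by (simp_all add: Mmat_def st_idx_def mu_vec_def mat_def algebra_simps)


lemma theta_eig:
  assumes "0 \<le> \<mu>" "\<mu> \<le> 1"
  shows "theta lam \<mu> t = (pp lam \<mu> + exp t * qq lam \<mu> +
     sqrt ((pp lam \<mu> - exp t * qq lam \<mu>)^2 + 4*((1 - lam) * sqrt (1-\<mu>) * sqrt \<mu> * exp (t/2))^2)) / 2"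
  unfolding theta_def pp_def qq_def by (rule eig2) (use gmat_entries[OF assms] in auto)

lemma norm_Dg: assumes "0 \<le> \<mu>" "\<mu> \<le> 1"
  shows "(norm (Dmat t *v gamma1 \<mu>))^2 = (1 - \<mu>) + \<mu> * exp t"
proof -
  have v: "Dmat t *v gamma1 \<mu> = vector [sqrt (1-\<mu>), exp (t/2) * sqrt \<mu>]"
    by (simp add: vec_eq_iff forall_2 matrix_vector_mult_def sum_2 Dmat_def gamma1_def)
  have n: "(norm (vector [a, b] :: real^2))^2 = a*a + b*b" for a b
    by (simp add: power2_norm_eq_inner inner_vec_def sum_2)
  have e: "exp (t/2) * exp (t/2) = exp t" by (simp flip: exp_add)
  have a1: "sqrt (1-\<mu>) * sqrt (1-\<mu>) = 1-\<mu>" using assms by simp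
  have a3: "sqrt \<mu> * sqrt \<mu> = \<mu>" using assms by simp
  have a2: "exp (t/2) * sqrt \<mu> * (exp (t/2) * sqrt \<mu>) = (exp (t/2) * exp (t/2)) * (sqrt \<mu> * sqrt \<mu>)"
    by (simp only: mult_ac)
  show ?thesis unfolding v n a1 a2 e a3 by (simp only: mult.commute)
qed

lemma Z_bound:
  fixes \<mu> lam t :: real and m :: nat
  assumes "0 < \<mu>" "\<mu> < 1" "lam < 1" "\<forall>i j. Mmat lam \<mu> $ i $ j \<ge> 0"
  shows "(\<Sum>ys \<in> Ls (Suc m). path_prob lam \<mu> ys * exp t ^ sum_list ys)
         \<le> ((1 - \<mu>) + \<mu> * exp t) * theta lam \<mu> t ^ m"
proof -
  define u where "u = exp t"
  define p where "p = pp lam \<mu>"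
  define q where "q = qq lam \<mu>"
  define g where "g = (1 - lam) * sqrt (1-\<mu>) * sqrt \<mu> * exp (t/2)"
  define w0 where "w0 = sqrt (1 - \<mu>)"
  define w1 where "w1 = sqrt \<mu> * exp (t/2)"
  define V0 where "V0 k = w0 * Ff lam \<mu> u k 0" for k
  define V1 where "V1 k = w1 * Ff lam \<mu> u k 1" for k
  define T where "T = theta lam \<mu> t"
  have ee: "exp (t/2) * exp (t/2) = u" unfolding u_def by (simp flip: exp_add)
  have w02: "w0^2 = 1 - \<mu>" unfolding w0_def using assms(1,2) by simp
  have w12: "w1^2 = \<mu> * u"
  proof -
    have "w1^2 = (sqrt \<mu>)^2 * (exp (t/2))^2" unfolding w1_def by (simp add: power_mult_distrib)
    also have "\<dots> = \<mu> * u" using assms(1,2) ee by (simp add: power2_eq_square)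
    finally show ?thesis .
  qed
  have p0: "p \<ge> 0"
  proof -
    have "Mmat lam \<mu> $ st_idx 0 $ st_idx 0 \<ge> 0" using assms(4) by blast
    then show ?thesis unfolding p_def pp_def Mmat_entries .
  qed
  have q0: "q \<ge> 0"
  proof -
    have "Mmat lam \<mu> $ st_idx 1 $ st_idx 1 \<ge> 0" using assms(4) by blast
    then show ?thesis unfolding q_def qq_def Mmat_entries .
  qed
  have u0: "u > 0" unfolding u_def by simp
  have g0: "g \<ge> 0" unfolding g_def using assms(1-3) by simp
  have T: "T = (p + u*q + sqrt ((p - u*q)^2 + 4*g^2)) / 2"
    unfolding T_def p_def q_def g_def u_def by (rule theta_eig) (use assms(1,2) in auto)
  have T0: "T \<ge> 0"
  proof -
    have "0 \<le> p + u*q" using p0 q0 u0 by simp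
    moreover have "0 \<le> sqrt ((p - u*q)^2 + 4*g^2)" by simp
    ultimately show ?thesis unfolding T by (rule divide_nonneg_pos[OF add_nonneg_nonneg]) auto
  qed
  have FS: "Ff lam \<mu> u (Suc k) y = Mmat lam \<mu> $ st_idx y $ st_idx 0 * Ff lam \<mu> u k 0
      + Mmat lam \<mu> $ st_idx y $ st_idx 1 * u * Ff lam \<mu> u k 1" for k y
    unfolding Ff_Suc by simp
  have a1: "sqrt (1-\<mu>) * sqrt (1-\<mu>) = 1-\<mu>" using assms(1,2) by simp
  have a3: "sqrt \<mu> * sqrt \<mu> = \<mu>" using assms(1,2) by simp
  have c0: "w0 * ((1 - lam) * \<mu>) * u = g * w1"
  proof -
    have "w0 * ((1 - lam) * \<mu>) * u = w0 * ((1 - lam) * (sqrt \<mu> * sqrt \<mu>)) * (exp (t/2) * exp (t/2))"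
      by (simp only: a3 ee)
    also have "\<dots> = g * w1" unfolding g_def w1_def w0_def by (simp only: mult_ac)
    finally show ?thesis .
  qed
  have c1: "w1 * ((1 - lam) * (1 - \<mu>)) = g * w0"
  proof -
    have "w1 * ((1 - lam) * (1 - \<mu>)) = w1 * ((1 - lam) * (sqrt (1-\<mu>) * sqrt (1-\<mu>)))"
      by (simp only: a1)
    also have "\<dots> = g * w0" unfolding g_def w1_def w0_def by (simp only: mult_ac)
    finally show ?thesis .
  qed
  have rec0: "V0 (Suc k) = p * V0 k + g * V1 k" for k
  proof -
    have "V0 (Suc k) = p * (w0 * Ff lam \<mu> u k 0) + (w0 * ((1 - lam) * \<mu>) * u) * Ff lam \<mu> u k 1"
      unfolding V0_def FS Mmat_entries p_def pp_def by (simp add: algebra_simps)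
    also have "\<dots> = p * V0 k + g * V1 k" unfolding c0 V0_def V1_def by (simp add: mult.assoc)
    finally show ?thesis .
  qed
  have rec1: "V1 (Suc k) = g * V0 k + (u*q) * V1 k" for k
  proof -
    have "V1 (Suc k) = (w1 * ((1 - lam) * (1 - \<mu>))) * Ff lam \<mu> u k 0 + (u * q) * (w1 * Ff lam \<mu> u k 1)"
      unfolding V1_def FS Mmat_entries q_def qq_def by (simp add: algebra_simps)
    also have "\<dots> = g * V0 k + (u*q) * V1 k" unfolding c1 V0_def V1_def by (simp add: mult.assoc)
    finally show ?thesis .
  qed
  define Nm where "Nm k = (V0 k)^2 + (V1 k)^2" for k
  have puq: "0 \<le> p + u*q" using p0 q0 u0 by simp
  have Nstep: "Nm (Suc k) \<le> T^2 * Nm k" for k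
  proof -
    have "(p * V0 k + g * V1 k)^2 + (g * V0 k + (u*q) * V1 k)^2 \<le> T^2 * ((V0 k)^2 + (V1 k)^2)"
      unfolding T by (rule norm_step[OF puq g0])
    then show ?thesis unfolding Nm_def rec0 rec1 .
  qed
  have Nk: "Nm k \<le> (T^2)^k * Nm 0" for k
  proof (induction k)
    case 0 then show ?case by simp
  next
    case (Suc k)
    have "Nm (Suc k) \<le> T^2 * Nm k" by (rule Nstep)
    also have "\<dots> \<le> T^2 * ((T^2)^k * Nm 0)" using Suc by (intro mult_left_mono) auto
    finally show ?case by (simp add: mult_ac)
  qed
  have N0: "Nm 0 = w0^2 + w1^2" unfolding Nm_def V0_def V1_def by (simp add: Ff_0)
  have Z: "(\<Sum>ys \<in> Ls (Suc m). path_prob lam \<mu> ys * exp t ^ sum_list ys) = w0 * V0 m + w1 * V1 m"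
  proof -
    have "(\<Sum>ys \<in> Ls (Suc m). path_prob lam \<mu> ys * exp t ^ sum_list ys)
        = (1 - \<mu>) * Ff lam \<mu> u m 0 + \<mu> * u * Ff lam \<mu> u m 1"
    proof -
      have st1: "mu_vec \<mu> $ st_idx (Suc 0) = \<mu>" "mu_vec \<mu> $ st_idx 0 = 1 - \<mu>"
        by (simp_all add: st_idx_def mu_vec_def)
      show ?thesis unfolding Z_Suc u_def by (simp add: st1)
    qed
    also have "\<dots> = w0 * V0 m + w1 * V1 m"
    proof -
      have "w0 * V0 m + w1 * V1 m = w0^2 * Ff lam \<mu> u m 0 + w1^2 * Ff lam \<mu> u m 1"
        unfolding V0_def V1_def by (simp only: power2_eq_square mult.assoc)
      then show ?thesis unfolding w02 w12 by simp
    qed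
    finally show ?thesis .
  qed
  have "(w0 * V0 m + w1 * V1 m)^2 \<le> (w0^2 + w1^2) * Nm m" unfolding Nm_def by (rule cs2)
  also have "\<dots> \<le> (w0^2 + w1^2) * ((T^2)^m * (w0^2 + w1^2))"
    using Nk[of m] N0 by (intro mult_left_mono) auto
  also have "\<dots> = ((w0^2 + w1^2) * T^m)^2" by (simp only: power2_eq_square power_mult_distrib mult_ac)
  finally have "w0 * V0 m + w1 * V1 m \<le> (w0^2 + w1^2) * T^m"
    by (rule power2_le_imp_le) (use T0 in simp)
  then show ?thesis unfolding Z w02 w12 T_def u_def by simp
qed


lemma mu_vec_nonneg: "0 \<le> \<mu> \<Longrightarrow> \<mu> \<le> 1 \<Longrightarrow> mu_vec \<mu> $ st_idx y \<ge> 0"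
  by (simp add: st_idx_def mu_vec_def)

lemma trp_nonneg: assumes "\<forall>i j. Mmat lam \<mu> $ i $ j \<ge> 0" shows "trp lam \<mu> y ys \<ge> 0"
proof (induction ys arbitrary: y)
  case Nil then show ?case by simp
next
  case (Cons z zs)
  then show ?case using assms by simp
qed

lemma path_prob_nonneg:
  assumes "\<forall>i j. Mmat lam \<mu> $ i $ j \<ge> 0" "0 \<le> \<mu>" "\<mu> \<le> 1"
  shows "path_prob lam \<mu> ys \<ge> 0"
proof (cases ys)
  case Nil then show ?thesis by simp
next
  case (Cons y zs)
  then show ?thesis using mu_vec_nonneg[OF assms(2,3)] trp_nonneg[OF assms(1)]
    by (simp del: path_prob.simps add: path_prob_Cons)
qed

lemma markov:
  assumes t: "t \<ge> 0" and nn: "\<And>ys. path_prob lam \<mu> ys \<ge> 0"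
  shows "prob_Sn_ge lam \<mu> n c \<le> exp (-(t*c)) * (\<Sum>ys \<in> Ls n. path_prob lam \<mu> ys * exp t ^ sum_list ys)"
proof -
  let ?S = "{ys. length ys = n \<and> set ys \<subseteq> {0, 1} \<and> real (sum_list ys) \<ge> c}"
  have sub: "?S \<subseteq> Ls n" unfolding Ls_def by auto
  have fin: "finite (Ls n)" by (rule finite_Ls)
  have ex: "exp (t * (real (sum_list ys) - c)) = exp (-(t*c)) * exp t ^ sum_list ys" for ys
  proof -
    have "exp (t * (real (sum_list ys) - c)) = exp (real (sum_list ys) * t) * exp (-(t*c))"
      by (simp add: algebra_simps flip: exp_add)
    also have "exp (real (sum_list ys) * t) = exp t ^ sum_list ys" by (rule exp_of_nat_mult)
    finally show ?thesis by simp
  qed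
  have "prob_Sn_ge lam \<mu> n c = (\<Sum>ys \<in> ?S. path_prob lam \<mu> ys)" unfolding prob_Sn_ge_def ..
  also have "\<dots> \<le> (\<Sum>ys \<in> ?S. path_prob lam \<mu> ys * exp (t * (real (sum_list ys) - c)))"
  proof (rule sum_mono)
    fix ys assume "ys \<in> ?S"
    then have "t * (real (sum_list ys) - c) \<ge> 0" using t by simp
    then have "exp (t * (real (sum_list ys) - c)) \<ge> 1" by simp
    then show "path_prob lam \<mu> ys \<le> path_prob lam \<mu> ys * exp (t * (real (sum_list ys) - c))"
      using nn[of ys] by (simp add: mult_le_cancel_left1)
  qed
  also have "\<dots> \<le> (\<Sum>ys \<in> Ls n. path_prob lam \<mu> ys * exp (t * (real (sum_list ys) - c)))"
    by (rule sum_mono2[OF fin sub]) (use nn in simp)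
  also have "\<dots> = exp (-(t*c)) * (\<Sum>ys \<in> Ls n. path_prob lam \<mu> ys * exp t ^ sum_list ys)"
    unfolding ex by (simp add: sum_distrib_left mult_ac)
  finally show ?thesis .
qed

lemma theta_pos:
  assumes "0 < \<mu>" "\<mu> < 1" "-1 < lam" "\<forall>i j. Mmat lam \<mu> $ i $ j \<ge> 0" "t \<ge> 0"
  shows "theta lam \<mu> t > 0"
proof -
  have p0: "pp lam \<mu> \<ge> 0"
  proof -
    have "Mmat lam \<mu> $ st_idx 0 $ st_idx 0 \<ge> 0" using assms(4) by blast
    then show ?thesis unfolding pp_def Mmat_entries .
  qed
  have q0: "qq lam \<mu> \<ge> 0"
  proof -
    have "Mmat lam \<mu> $ st_idx 1 $ st_idx 1 \<ge> 0" using assms(4) by blast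
    then show ?thesis unfolding qq_def Mmat_entries .
  qed
  have "exp t \<ge> 1" using assms(5) by simp
  then have "qq lam \<mu> \<le> exp t * qq lam \<mu>" using q0 by (simp add: mult_le_cancel_right1)
  moreover have "pp lam \<mu> + qq lam \<mu> = 1 + lam" unfolding pp_def qq_def by (simp add: algebra_simps)
  ultimately have S: "pp lam \<mu> + exp t * qq lam \<mu> > 0" using assms(3) by linarith
  show ?thesis unfolding theta_eig[OF less_imp_le[OF assms(1)] less_imp_le[OF assms(2)]]
    using S by (rule divide_pos_pos[OF add_pos_nonneg]) simp_all
qed

lemma chernoff:
  assumes "0 < \<mu>" "\<mu> < 1" "-1 < lam" "lam < 1" "\<forall>i j. Mmat lam \<mu> $ i $ j \<ge> 0" "t \<ge> 0"
  shows "prob_Sn_ge lam \<mu> (Suc m) c \<le> exp (-(t*c)) * (((1 - \<mu>) + \<mu> * exp t) * theta lam \<mu> t ^ m)"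
proof -
  have nn: "path_prob lam \<mu> ys \<ge> 0" for ys using path_prob_nonneg[OF assms(5)] assms(1,2) by simp
  have "prob_Sn_ge lam \<mu> (Suc m) c \<le> exp (-(t*c)) * (\<Sum>ys \<in> Ls (Suc m). path_prob lam \<mu> ys * exp t ^ sum_list ys)"
    by (rule markov[OF assms(6) nn])
  also have "\<dots> \<le> exp (-(t*c)) * (((1 - \<mu>) + \<mu> * exp t) * theta lam \<mu> t ^ m)"
    by (rule mult_left_mono[OF Z_bound[OF assms(1,2,4,5)]]) simp
  finally show ?thesis .
qed


lemma alg_core:
  fixes \<mu> lam a :: real
  assumes mu: "0 < \<mu>" "\<mu> < 1" and lam: "0 \<le> lam" "lam < 1" and a: "0 < a" "a < 1"
  defines "p \<equiv> pp lam \<mu>" and "q \<equiv> qq lam \<mu>"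
  defines "\<Delta> \<equiv> 1 + 4 * lam * a * (1 - a) / (\<mu> * (1 - \<mu>) * (1 - lam)^2)"
  defines "R \<equiv> sqrt \<Delta> + 1"
  defines "X \<equiv> 1 - 2 * (1 - a) / R" and "Y \<equiv> 1 - 2 * a / R"
  shows "R \<ge> 2" "X > 0" "Y > 0" "lam * X * Y = p * q * (X + Y - 1)"
    and "(1 - lam)^2 * (R - 1)^2 = (1 - lam)^2 + 4 * lam * a * (1 - a) / (\<mu> * (1 - \<mu>))"
proof -
  have den: "\<mu> * (1 - \<mu>) * (1 - lam)^2 > 0" using mu lam by simp
  have D1: "\<Delta> \<ge> 1" unfolding \<Delta>_def using den mu lam a by simp
  have r2: "(sqrt \<Delta>)^2 = \<Delta>" using D1 by simp
  have r1: "sqrt \<Delta> \<ge> 1" using D1 by simp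
  show R2: "R \<ge> 2" unfolding R_def using r1 by simp
  then have R0: "R > 0" by simp
  show "X > 0" unfolding X_def using R2 a by (simp add: field_simps)
  show "Y > 0" unfolding Y_def using R2 a by (simp add: field_simps)
  have key: "(p * q - lam) * (R^2 - 2*R) = 4 * lam * a * (1 - a)"
  proof -
    have "R^2 - 2*R = \<Delta> - 1" unfolding R_def using r2 by (simp add: power2_eq_square algebra_simps)
    also have "\<dots> = 4 * lam * a * (1 - a) / (\<mu> * (1 - \<mu>) * (1 - lam)^2)" unfolding \<Delta>_def by simp
    finally have e: "R^2 - 2*R = 4 * lam * a * (1 - a) / (\<mu> * (1 - \<mu>) * (1 - lam)^2)" .
    have dd: "(1 - lam)^2 * \<mu> * (1 - \<mu>) = \<mu> * (1 - \<mu>) * (1 - lam)^2" by (simp only: mult_ac)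
    show ?thesis unfolding e p_def q_def pq_lam dd using den mu lam by simp
  qed
  have XYR: "X * Y * R^2 = R^2 - 2*R + 4*a*(1-a)" unfolding X_def Y_def using R0
    by (simp add: field_simps power2_eq_square)
  have SR: "(X + Y - 1) * R^2 = R^2 - 2*R" unfolding X_def Y_def using R0
    by (simp add: field_simps power2_eq_square)
  have "lam * X * Y * R^2 = p * q * (X + Y - 1) * R^2"
  proof -
    have "lam * X * Y * R^2 = lam * (R^2 - 2*R + 4*a*(1-a))" using XYR by (simp add: mult.assoc)
    also have "\<dots> = p * q * (R^2 - 2*R)" using key by (simp add: algebra_simps)
    also have "\<dots> = p * q * (X + Y - 1) * R^2" using SR by (simp add: mult.assoc)
    finally show ?thesis .
  qed
  then show "lam * X * Y = p * q * (X + Y - 1)" using R0 by simp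
  show "(1 - lam)^2 * (R - 1)^2 = (1 - lam)^2 + 4 * lam * a * (1 - a) / (\<mu> * (1 - \<mu>))"
  proof -
    have RD: "(R - 1)^2 = \<Delta>" unfolding R_def using r2 by simp
    have gen: "K * (1 + N / (M * K)) = K + N / M" if "M > 0" "K > 0" for K N M :: real
      using that by (simp add: field_simps)
    have "\<mu> * (1 - \<mu>) > 0" "(1 - lam)^2 > 0" using mu lam by auto
    then show ?thesis unfolding RD \<Delta>_def by (rule gen)
  qed
qed


lemma idents:
  fixes X Y p q a lam :: real
  assumes X: "X > 0" and Y: "Y > 0" and p: "p > 0" and q: "q > 0"
    and core: "lam * X * Y = p * q * (X + Y - 1)" and lin: "a * X - (1 - a) * Y = 2 * a - 1"
  shows "(1 - a) * (p / Y) + a * (lam * X / q) = p"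
    and "a * (p / Y) + (1 - a) * (lam * X / q) = q * (p * X / (q * Y))"
proof -
  have e1: "(1 - a) + a * (X + Y - 1) = Y"
  proof -
    have "(1 - a) + a * (X + Y - 1) - Y = (a * X - (1 - a) * Y) - (2*a - 1)" by (simp add: algebra_simps)
    then show ?thesis unfolding lin by simp
  qed
  have e2: "a + (1 - a) * (X + Y - 1) = X"
  proof -
    have "a + (1 - a) * (X + Y - 1) - X = (2*a - 1) - (a * X - (1 - a) * Y)" by (simp add: algebra_simps)
    then show ?thesis unfolding lin by simp
  qed
  have "(1 - a) * (p / Y) + a * (lam * X / q) = ((1 - a) * p * q + a * (lam * X * Y)) / (q * Y)"
    using Y q by (simp add: field_simps)
  also have "\<dots> = (p * q * ((1 - a) + a * (X + Y - 1))) / (q * Y)" unfolding core by (simp add: algebra_simps)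
  also have "\<dots> = p" unfolding e1 using Y q by simp
  finally show "(1 - a) * (p / Y) + a * (lam * X / q) = p" .
  have "a * (p / Y) + (1 - a) * (lam * X / q) = (a * p * q + (1 - a) * (lam * X * Y)) / (q * Y)"
    using Y q by (simp add: field_simps)
  also have "\<dots> = (p * q * (a + (1 - a) * (X + Y - 1))) / (q * Y)" unfolding core by (simp add: algebra_simps)
  also have "\<dots> = q * (p * X / (q * Y))" unfolding e2 using Y q by simp
  finally show "a * (p / Y) + (1 - a) * (lam * X / q) = q * (p * X / (q * Y))" .
qed

lemma tangent:
  fixes th us a lam p q u V :: real
  assumes th: "th > 0" and us: "us > 0" and a: "0 \<le> a" "a \<le> 1" and lam: "lam \<ge> 0" and u: "u > 0"
    and V: "V = lam * us / th"
    and T1: "a * th + (1 - a) * V = q * us" and T2: "(1 - a) * th + a * V = p"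
  shows "th * (u / us) powr a \<le> rt (p + q * u) (lam * u)"
proof -
  define y where "y = u / us"
  have y: "y > 0" unfolding y_def using u us by simp
  define c where "c = th * y powr a"
  have c: "c > 0" unfolding c_def using th y by simp
  have V0: "V \<ge> 0" unfolding V using lam us th by simp
  have lc: "lam * u / c = V * y powr (1 - a)"
  proof -
    have "y powr (1 - a) = y / y powr a" using y by (simp add: powr_diff)
    moreover have "u = y * us" unfolding y_def using us by simp
    ultimately show ?thesis unfolding c_def V using th y by (simp add: field_simps)
  qed
  have b1: "y powr a \<le> a * y + (1 - a)" by (rule amgm_powr) (use y a in auto)
  have b2: "y powr (1 - a) \<le> (1 - a) * y + (1 - (1 - a))" by (rule amgm_powr) (use y a in auto)
  have "c + lam * u / c = th * y powr a + V * y powr (1 - a)" using lc unfolding c_def by simp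
  also have "\<dots> \<le> th * (a * y + (1 - a)) + V * ((1 - a) * y + a)"
    using b1 b2 th V0 by (intro add_mono mult_left_mono) auto
  also have "\<dots> = y * (a * th + (1 - a) * V) + ((1 - a) * th + a * V)" by (simp add: algebra_simps)
  also have "\<dots> = q * u + p" unfolding T1 T2 y_def using us by simp
  finally have le: "c + lam * u / c \<le> q * u + p" .
  have "c^2 - (p + q*u) * c + lam * u = c * (c + lam * u / c - (q * u + p))"
    using c by (simp add: field_simps power2_eq_square)
  also have "\<dots> \<le> 0" using c le by (simp add: mult_nonneg_nonpos)
  finally have "c \<le> rt (p + q * u) (lam * u)" by (rule rt_upper)
  then show ?thesis unfolding c_def y_def .
qed


lemma us_ge_aux:
  fixes k lam r d e :: real
  assumes k: "k = 1 - lam" "lam < 1" and lam: "lam \<ge> 0" and r: "r \<ge> 0"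
    and de: "-1 < d" "d < e" "e < 1"
    and kr: "k^2 * r^2 = k^2 + 4 * lam * (1 - e^2) / (1 - d^2)"
  shows "k * d * r \<le> (1 + lam) * e"
proof -
  have k0: "k > 0" using k by simp
  have d2: "1 - d^2 > 0"
  proof -
    have "\<bar>d\<bar> < 1" using de by auto
    then have "d^2 < 1" by (metis abs_square_less_1)
    then show ?thesis by simp
  qed
  have kl: "k^2 + 4 * lam = (1 + lam)^2" unfolding k by (simp add: power2_eq_square algebra_simps)
  consider "d \<le> 0" "e \<ge> 0" | "d > 0" | "e < 0" by linarith
  then show ?thesis
  proof cases
    case 1
    then have "k * d * r \<le> 0" using k0 r by (simp add: mult_nonneg_nonpos mult_nonpos_nonneg)
    moreover have "(1 + lam) * e \<ge> 0" using 1 lam by simp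
    ultimately show ?thesis by linarith
  next
    case 2
    have e0: "e > 0" using 2 de by simp
    have ed: "d^2 < e^2" using 2 de by (simp add: power_strict_mono)
    have fr: "(1 - e^2) / (1 - d^2) \<le> 1" using d2 ed by simp
    have "(k * d * r)^2 = d^2 * (k^2 * r^2)" by (simp add: power_mult_distrib)
    also have "\<dots> = d^2 * (k^2 + 4 * lam * ((1 - e^2) / (1 - d^2)))" unfolding kr by simp
    also have "\<dots> \<le> d^2 * (k^2 + 4 * lam * 1)"
      using fr lam by (intro mult_left_mono add_left_mono) auto
    also have "\<dots> = d^2 * (1 + lam)^2" using kl by simp
    also have "\<dots> \<le> e^2 * (1 + lam)^2" using ed by (intro mult_right_mono) auto
    also have "\<dots> = ((1 + lam) * e)^2" by (simp add: power_mult_distrib)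
    finally have "(k * d * r)^2 \<le> ((1 + lam) * e)^2" .
    then show ?thesis by (rule power2_le_imp_le) (use e0 lam in simp)
  next
    case 3
    have dneg: "d < 0" using 3 de by simp
    have ed: "e^2 \<le> d^2"
    proof -
      have "-e \<le> -d" using de by simp
      then have "(-e)^2 \<le> (-d)^2" using 3 by (intro power_mono) auto
      then show ?thesis by simp
    qed
    have "((1 + lam) * e)^2 * (1 - d^2) = (k^2 + 4*lam) * e^2 * (1 - d^2)"
      unfolding kl by (simp add: power_mult_distrib)
    also have "\<dots> \<le> (k^2 + 4*lam) * e^2 * (1 - d^2) + (k^2 * (1 - d^2) + 4 * lam) * (d^2 - e^2)"
      using ed d2 lam by (simp add: mult_nonneg_nonneg)
    also have "\<dots> = d^2 * (k^2 * (1 - d^2) + 4 * lam * (1 - e^2))"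
      by (simp add: algebra_simps)
    also have "\<dots> = d^2 * (k^2 * r^2) * (1 - d^2)"
      unfolding kr using d2 by (simp add: field_simps)
    finally have "((1 + lam) * e)^2 * (1 - d^2) \<le> (k * d * r)^2 * (1 - d^2)"
      by (simp add: power_mult_distrib mult_ac)
    then have sq: "((1 + lam) * (-e))^2 \<le> (k * (-d) * r)^2" using d2 by simp
    have y0: "0 \<le> k * (-d) * r" using k0 dneg r by (intro mult_nonneg_nonneg) auto
    have "(1 + lam) * (-e) \<le> k * (-d) * r"
      by (rule power2_le_imp_le[OF sq y0])
    then show ?thesis by simp
  qed
qed


lemma rt_le_W:
  fixes p q lam x m :: real
  assumes K1: "p * exp (-x) + q * exp x \<le> exp m + lam * exp (-m)" and K2: "lam \<le> exp (2*m)"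
  shows "rt (p + q * exp (2*x)) (lam * exp (2*x)) \<le> exp (m + x)"
proof -
  define E where "E = exp x"
  define F where "F = exp m"
  have E: "E > 0" and F: "F > 0" unfolding E_def F_def by simp_all
  have e2: "exp (2*x) = E * E" unfolding E_def by (simp flip: exp_add)
  have emx: "exp (m + x) = F * E" unfolding E_def F_def by (simp add: exp_add)
  have K1': "p / E + q * E \<le> F + lam / F"
    using K1 unfolding E_def F_def by (simp add: exp_minus divide_inverse)
  have K2': "lam / F \<le> F"
  proof -
    have "exp (2*m) = F * F" unfolding F_def by (simp flip: exp_add)
    then show ?thesis using K2 F by (simp add: divide_le_eq)
  qed
  show ?thesis unfolding e2 emx
  proof (rule rt_lower)
    have "(F * E)^2 - (p + q * (E * E)) * (F * E) + lam * (E * E) = (E * E * F) * (F + lam / F - (p / E + q * E))"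
      using E F by (simp add: field_simps power2_eq_square)
    also have "\<dots> \<ge> 0" using K1' E F by (intro mult_nonneg_nonneg) auto
    finally show "(F * E)^2 - (p + q * (E * E)) * (F * E) + lam * (E * E) \<ge> 0" .
    have "p / E + q * E \<le> 2 * F" using K1' K2' by linarith
    then have "(p / E + q * E) * E \<le> 2 * F * E" using E by (intro mult_right_mono) auto
    moreover have "(p / E + q * E) * E = p + q * (E * E)" using E by (simp add: field_simps)
    ultimately show "2 * (F * E) \<ge> p + q * (E * E)" by (simp add: mult_ac)
  qed
qed

lemma powr_nat_mult: "x > 0 \<Longrightarrow> x powr (real n * b) = (x powr b) ^ n"
  by (metis mult.commute powr_powr powr_realpow powr_gt_zero)


lemma part2:
  fixes \<mu> lam \<epsilon> :: real and m :: nat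
  assumes mu: "0 < \<mu>" "\<mu> < 1" and lam: "0 \<le> lam" "lam < 1"
    and M: "\<forall>i j. Mmat lam \<mu> $ i $ j \<ge> 0"
    and eps: "\<epsilon> > 0" "\<mu> + \<epsilon> < 1"
  defines "a \<equiv> \<mu> + \<epsilon>"
  defines "\<Delta> \<equiv> 1 + 4 * lam * a * (1 - a) / (\<mu> * (1 - \<mu>) * (1 - lam)^2)"
  defines "X \<equiv> 1 - 2 * (1 - a) / (sqrt \<Delta> + 1)" and "Y \<equiv> 1 - 2 * a / (sqrt \<Delta> + 1)"
  defines "C \<equiv> (qq lam \<mu> / X) powr a * (pp lam \<mu> / Y) powr (1 - a)"
  shows "prob_Sn_ge lam \<mu> (Suc m) (real (Suc m) * a) \<le> C ^ Suc m"
    and "C \<le> exp (- 2 * ((1 - lam) / (1 + lam)) * \<epsilon>^2)"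
    and "C ^ Suc m = (qq lam \<mu> / X) powr (real (Suc m) * a) * (pp lam \<mu> / Y) powr (real (Suc m) * (1 - a))"
    and "C \<ge> 0"
proof -
  define p where "p = pp lam \<mu>"
  define q where "q = qq lam \<mu>"
  define R where "R = sqrt \<Delta> + 1"
  have a: "0 < a" "a < 1" "\<mu> < a" unfolding a_def using mu eps by auto
  have p: "p > 0" unfolding p_def pp_def using mu lam by (simp add: add_pos_nonneg)
  have q: "q > 0" unfolding q_def qq_def using mu lam by (simp add: add_pos_nonneg)
  note core = alg_core[OF mu lam a(1,2)]
  have R2: "R \<ge> 2" using core(1) unfolding R_def \<Delta>_def .
  have X: "X > 0" using core(2) unfolding X_def \<Delta>_def .
  have Y: "Y > 0" using core(3) unfolding Y_def \<Delta>_def .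
  have cXY: "lam * X * Y = p * q * (X + Y - 1)" using core(4) unfolding X_def Y_def \<Delta>_def p_def q_def .
  have kr: "(1 - lam)^2 * (R - 1)^2 = (1 - lam)^2 + 4 * lam * a * (1 - a) / (\<mu> * (1 - \<mu>))"
    using core(5) unfolding R_def \<Delta>_def .
  have XR: "X = 1 - 2 * (1 - a) / R" and YR: "Y = 1 - 2 * a / R" unfolding X_def Y_def R_def by simp_all
  have lin: "a * X - (1 - a) * Y = 2 * a - 1" unfolding XR YR using R2 by (simp add: field_simps)
  note ids = idents[OF X Y p q cXY lin]
  define th where "th = p / Y"
  define us where "us = p * X / (q * Y)"
  have th: "th > 0" unfolding th_def using p Y by simp
  have us: "us > 0" unfolding us_def using p q X Y by simp
  have Veq: "lam * us / th = lam * X / q" unfolding us_def th_def using p q X Y by (simp add: field_simps)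
  have T2: "(1 - a) * th + a * (lam * us / th) = p" unfolding Veq by (unfold th_def) (rule ids(1))
  have T1: "a * th + (1 - a) * (lam * us / th) = q * us" unfolding Veq by (unfold th_def us_def) (rule ids(2))
  have us1: "us \<ge> 1"
  proof -
    have "(1 - lam) * (2*\<mu> - 1) * (R - 1) \<le> (1 + lam) * (2*a - 1)"
    proof (rule us_ge_aux)
      show "1 - lam = 1 - lam" "lam < 1" "lam \<ge> 0" using lam by auto
      show "R - 1 \<ge> 0" using R2 by simp
      show "-1 < 2*\<mu> - 1" "2*\<mu> - 1 < 2*a - 1" "2*a - 1 < 1" using mu a by auto
      have "1 - (2*a - 1)^2 = 4 * (a * (1 - a))" by (simp add: power2_eq_square algebra_simps)
      moreover have "1 - (2*\<mu> - 1)^2 = 4 * (\<mu> * (1 - \<mu>))" by (simp add: power2_eq_square algebra_simps)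
      ultimately have "4 * lam * (1 - (2*a - 1)^2) / (1 - (2*\<mu> - 1)^2) = 4 * lam * a * (1 - a) / (\<mu> * (1 - \<mu>))"
        by (simp add: mult.assoc)
      then show "(1 - lam)^2 * (R - 1)^2 = (1 - lam)^2 + 4 * lam * (1 - (2*a - 1)^2) / (1 - (2*\<mu> - 1)^2)"
        using kr by simp
    qed
    moreover have "p * X - q * Y = ((p - q) * (R - 1) + (p + q) * (2*a - 1)) / R"
      unfolding XR YR using R2 by (simp add: field_simps)
    moreover have "p - q = - ((1 - lam) * (2*\<mu> - 1))" "p + q = 1 + lam"
      unfolding p_def q_def pp_def qq_def by (simp_all add: algebra_simps)
    ultimately have "p * X - q * Y \<ge> 0" using R2 by simp
    then have "q * Y \<le> p * X" by simp
    then show ?thesis unfolding us_def using q Y by simp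
  qed
  have rt_us: "rt (p + q * us) (lam * us) \<le> th"
  proof (rule rt_lower)
    have "th^2 - (p + q * us) * th + lam * us = th * (th + lam * us / th - (p + q * us))"
      using th by (simp add: field_simps power2_eq_square)
    also have "th + lam * us / th = p + q * us"
    proof -
      have gen: "th + V = (a * th + (1 - a) * V) + ((1 - a) * th + a * V)" for V
        by (simp add: algebra_simps)
      show ?thesis unfolding gen[of "lam * us / th"] T1 T2 by simp
    qed
    finally show "th^2 - (p + q * us) * th + lam * us \<ge> 0" by simp
    have "X + Y = 2 - 2 / R" unfolding XR YR using R2 by (simp add: field_simps)
    moreover have "2 / R \<ge> 0" using R2 by simp
    ultimately have "X + Y \<le> 2" by linarith
    then have "p * (X + Y) / Y \<le> p * 2 / Y" using p Y by (intro divide_right_mono mult_left_mono) auto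
    moreover have "p * X / Y + p = p * (X + Y) / Y" using Y by (simp add: field_simps)
    ultimately have "p * X / Y + p \<le> 2 * p / Y" by (simp add: mult.commute)
    moreover have "q * us = p * X / Y" unfolding us_def using q by simp
    ultimately show "2 * th \<ge> p + q * us" unfolding th_def by simp
  qed
  have Cth: "C = th * us powr (-a)"
  proof -
    have gen: "P * (P / Q) powr (-a) = Q powr a * P powr (1 - a)" if PQ: "P > 0" "Q > 0" for P Q :: real
    proof -
      have e1: "(P / Q) powr (-a) = P powr (-a) / Q powr (-a)" using PQ by (simp add: powr_divide)
      have e2: "Q powr (-a) = inverse (Q powr a)" "P powr (-a) = inverse (P powr a)" by (simp_all add: powr_minus)
      have e3: "P powr (1 - a) = P / P powr a" using PQ by (simp add: powr_diff)
      show ?thesis unfolding e1 e2 e3 using PQ by (simp add: field_simps)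
    qed
    have P': "p / Y > 0" and Q': "q / X > 0" using p q X Y by simp_all
    have "us = (p / Y) / (q / X)" unfolding us_def using X Y q by (simp add: field_simps)
    then have "th * us powr (-a) = (q / X) powr a * (p / Y) powr (1 - a)"
      unfolding th_def using gen[OF P' Q'] by simp
    then show ?thesis unfolding C_def p_def q_def by simp
  qed
  show "prob_Sn_ge lam \<mu> (Suc m) (real (Suc m) * a) \<le> C ^ Suc m"
  proof -
    define ts where "ts = ln us"
    have ets: "exp ts = us" unfolding ts_def using us by simp
    have ts0: "ts \<ge> 0" unfolding ts_def using us1 by simp
    define T where "T = theta lam \<mu> ts"
    have Trt: "T = rt (p + q * us) (lam * us)"
      unfolding T_def p_def q_def using theta_eq[of \<mu> lam ts] mu ets by simp
    define h where "h = (1 - \<mu>) + \<mu> * us"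
    have hT: "h \<le> T" unfolding Trt
    proof (rule rt_upper)
      have "h^2 - (p + q * us) * h + lam * us = lam * (h - 1) * (h - us)"
        unfolding h_def p_def q_def pp_def qq_def by (simp add: power2_eq_square algebra_simps)
      also have "\<dots> \<le> 0"
      proof -
        have "h - 1 \<ge> 0" unfolding h_def using us1 mu by (simp add: algebra_simps)
        moreover have "h - us \<le> 0"
        proof -
          have "h - us = (1 - \<mu>) * (1 - us)" unfolding h_def by (simp add: algebra_simps)
          then show ?thesis using us1 mu by (simp add: mult_nonneg_nonpos)
        qed
        ultimately show ?thesis using lam by (simp add: mult_nonneg_nonpos)
      qed
      finally show "h^2 - (p + q * us) * h + lam * us \<le> 0" .
    qed
    have h0: "h > 0" unfolding h_def using mu us by (simp add: add_pos_nonneg)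
    have T0: "T \<ge> 0" using hT h0 by simp
    have Tth: "T \<le> th" unfolding Trt by (rule rt_us)
    have "prob_Sn_ge lam \<mu> (Suc m) (real (Suc m) * a)
          \<le> exp (-(ts * (real (Suc m) * a))) * (((1 - \<mu>) + \<mu> * exp ts) * theta lam \<mu> ts ^ m)"
      by (rule chernoff) (use mu lam M ts0 in auto)
    also have "\<dots> = exp (-(ts * (real (Suc m) * a))) * (h * T ^ m)"
      unfolding h_def T_def ets ..
    also have "\<dots> \<le> exp (-(ts * (real (Suc m) * a))) * (T * T ^ m)"
      using hT T0 by (intro mult_left_mono mult_right_mono) auto
    also have "\<dots> \<le> exp (-(ts * (real (Suc m) * a))) * (th ^ Suc m)"
      using power_mono[OF Tth T0, of "Suc m"] by (intro mult_left_mono) auto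
    also have "exp (-(ts * (real (Suc m) * a))) = (us powr (-a)) ^ Suc m"
    proof -
      have "exp (-(ts * (real (Suc m) * a))) = us powr (real (Suc m) * (-a))"
        unfolding ts_def using us by (simp add: powr_def mult_ac)
      also have "\<dots> = (us powr (-a)) ^ Suc m" by (rule powr_nat_mult[OF us])
      finally show ?thesis .
    qed
    also have "(us powr (-a)) ^ Suc m * th ^ Suc m = C ^ Suc m"
      unfolding Cth by (simp add: power_mult_distrib mult.commute)
    finally show ?thesis .
  qed
  show "C \<le> exp (- 2 * ((1 - lam) / (1 + lam)) * \<epsilon>^2)"
  proof -
    define cc where "cc = (1 - lam) / (1 + lam)"
    have cc: "cc > 0" unfolding cc_def using lam by simp
    define x where "x = 2 * cc * \<epsilon>"
    have x0: "x \<ge> 0" unfolding x_def using cc eps by simp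
    define m' where "m' = x^2 / (2*cc) + (2*\<mu> - 1) * x"
    define u where "u = exp (2*x)"
    have u0: "u > 0" unfolding u_def by simp
    have K1: "p * exp (-x) + q * exp x \<le> exp m' + lam * exp (-m')"
      using key_cosh(1)[OF lam mu x0] unfolding p_def q_def pp_def qq_def m'_def cc_def .
    have K2: "lam \<le> exp (2*m')"
      using key_cosh(2)[OF lam mu x0] unfolding m'_def cc_def .
    have W: "rt (p + q * u) (lam * u) \<le> exp (m' + x)" unfolding u_def by (rule rt_le_W[OF K1 K2])
    have tg: "th * (u / us) powr a \<le> rt (p + q * u) (lam * u)"
      by (rule tangent[OF th us _ _ lam(1) u0 refl T1 T2]) (use a in auto)
    have "th * (u / us) powr a = C * u powr a"
    proof -
      have "(u / us) powr a = u powr a / us powr a" using u0 us by (simp add: powr_divide)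
      moreover have "us powr (-a) = inverse (us powr a)" by (simp add: powr_minus)
      ultimately show ?thesis unfolding Cth by (simp add: divide_inverse mult_ac)
    qed
    moreover have "u powr a = exp (2 * a * x)" unfolding u_def by (simp add: powr_def mult_ac)
    ultimately have "C * exp (2 * a * x) \<le> exp (m' + x)" using tg W by simp
    then have "C \<le> exp (m' + x) / exp (2 * a * x)" by (simp add: le_divide_eq)
    also have "\<dots> = exp (m' + x - 2 * a * x)" by (simp add: exp_diff)
    also have "m' + x - 2 * a * x = - 2 * cc * \<epsilon>^2"
      unfolding m'_def x_def a_def using cc by (simp add: field_simps power2_eq_square)
    finally show ?thesis unfolding cc_def .
  qed
  have P': "pp lam \<mu> / Y > 0" and Q': "qq lam \<mu> / X > 0" using p q X Y unfolding p_def q_def by simp_all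
  show "C ^ Suc m = (qq lam \<mu> / X) powr (real (Suc m) * a) * (pp lam \<mu> / Y) powr (real (Suc m) * (1 - a))"
    unfolding C_def powr_nat_mult[OF P'] powr_nat_mult[OF Q'] by (simp add: power_mult_distrib)
  show "C \<ge> 0" unfolding C_def by simp
qed

theorem proposition1:
  fixes \<mu> lam \<epsilon> t :: real and n :: nat
  assumes "0 < \<mu>" and "\<mu> < 1"
    and "-1 < lam" and "lam < 1"
    and "\<forall>i j. Mmat lam \<mu> $ i $ j \<ge> 0"
    and "\<epsilon> > 0" and "\<mu> + \<epsilon> < 1"
    and "n \<ge> 1" and "t \<ge> 0"
  shows "(prob_Sn_ge lam \<mu> n (real n * (\<mu> + \<epsilon>))
           \<le> (norm (Dmat t *v gamma1 \<mu>))\<^sup>2 / theta lam \<mu> t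
              * exp (- real n * (t * (\<mu> + \<epsilon>) - ln (theta lam \<mu> t))))
         \<and> (0 \<le> lam \<longrightarrow>
           (let \<mu>b = 1 - \<mu>;
                \<Delta> = 1 + 4 * lam * (\<mu> + \<epsilon>) * (\<mu>b - \<epsilon>) / (\<mu> * \<mu>b * (1 - lam)\<^sup>2);
                B = ((\<mu> + \<mu>b * lam) / (1 - 2 * (\<mu>b - \<epsilon>) / (sqrt \<Delta> + 1)))
                      powr (real n * (\<mu> + \<epsilon>))
                  * ((\<mu>b + \<mu> * lam) / (1 - 2 * (\<mu> + \<epsilon>) / (sqrt \<Delta> + 1)))
                      powr (real n * (\<mu>b - \<epsilon>))
            in prob_Sn_ge lam \<mu> n (real n * (\<mu> + \<epsilon>)) \<le> B
               \<and> B \<le> exp (- 2 * ((1 - lam) / (1 + lam)) * real n * \<epsilon>\<^sup>2)))"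
proof -
  obtain m where n: "n = Suc m" using assms(8) by (cases n) auto
  define a where "a = \<mu> + \<epsilon>"
  define T where "T = theta lam \<mu> t"
  have T0: "T > 0" unfolding T_def by (rule theta_pos) (use assms in auto)
  have part1: "prob_Sn_ge lam \<mu> n (real n * a)
           \<le> (norm (Dmat t *v gamma1 \<mu>))\<^sup>2 / T * exp (- real n * (t * a - ln T))"
  proof -
    have "prob_Sn_ge lam \<mu> n (real n * a) \<le> exp (-(t * (real n * a))) * (((1 - \<mu>) + \<mu> * exp t) * T ^ m)"
      unfolding n T_def by (rule chernoff) (use assms in auto)
    also have "\<dots> = (norm (Dmat t *v gamma1 \<mu>))\<^sup>2 / T * exp (- real n * (t * a - ln T))"
    proof -
      have "exp (- real n * (t * a - ln T)) = exp (-(t * (real n * a))) * exp (real n * ln T)"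
        by (simp add: algebra_simps flip: exp_add)
      also have "exp (real n * ln T) = T ^ n" using T0 by (simp add: exp_of_nat_mult)
      finally have e: "exp (- real n * (t * a - ln T)) = exp (-(t * (real n * a))) * T ^ n" .
      have gen: "h / T * (E * (T * T ^ m)) = E * (h * T ^ m)" for h E :: real
        using T0 by (simp add: field_simps)
      have "(norm (Dmat t *v gamma1 \<mu>))\<^sup>2 / T * exp (- real n * (t * a - ln T))
          = ((1 - \<mu>) + \<mu> * exp t) / T * (exp (-(t * (real n * a))) * T ^ n)"
        unfolding e norm_Dg[OF less_imp_le[OF assms(1)] less_imp_le[OF assms(2)]] ..
      also have "\<dots> = exp (-(t * (real n * a))) * (((1 - \<mu>) + \<mu> * exp t) * T ^ m)"
        unfolding n power_Suc gen ..
      finally show ?thesis by simp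
    qed
    finally show ?thesis .
  qed
  have part2': "prob_Sn_ge lam \<mu> n (real n * (\<mu> + \<epsilon>)) \<le> B \<and> B \<le> exp (- 2 * ((1 - lam) / (1 + lam)) * real n * \<epsilon>\<^sup>2)"
    if lam0: "0 \<le> lam" and
    B: "B = ((\<mu> + (1 - \<mu>) * lam) / (1 - 2 * ((1 - \<mu>) - \<epsilon>) / (sqrt (1 + 4 * lam * (\<mu> + \<epsilon>) * ((1 - \<mu>) - \<epsilon>) / (\<mu> * (1 - \<mu>) * (1 - lam)\<^sup>2)) + 1)))
                      powr (real n * (\<mu> + \<epsilon>))
                  * (((1 - \<mu>) + \<mu> * lam) / (1 - 2 * (\<mu> + \<epsilon>) / (sqrt (1 + 4 * lam * (\<mu> + \<epsilon>) * ((1 - \<mu>) - \<epsilon>) / (\<mu> * (1 - \<mu>) * (1 - lam)\<^sup>2)) + 1)))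
                      powr (real n * ((1 - \<mu>) - \<epsilon>))" for B
  proof -
    have e1: "1 - (\<mu> + \<epsilon>) = (1 - \<mu>) - \<epsilon>" by simp
    have e2: "qq lam \<mu> = \<mu> + (1 - \<mu>) * lam" "pp lam \<mu> = (1 - \<mu>) + \<mu> * lam"
      unfolding qq_def pp_def by (simp_all add: mult.commute)
    note P2 = part2[OF assms(1,2) lam0 assms(4,5,6,7)]
    have B': "B = ((qq lam \<mu> / (1 - 2 * (1 - (\<mu> + \<epsilon>)) / (sqrt (1 + 4 * lam * (\<mu> + \<epsilon>) * (1 - (\<mu> + \<epsilon>)) / (\<mu> * (1 - \<mu>) * (1 - lam)\<^sup>2)) + 1))) powr (\<mu> + \<epsilon>) *
              (pp lam \<mu> / (1 - 2 * (\<mu> + \<epsilon>) / (sqrt (1 + 4 * lam * (\<mu> + \<epsilon>) * (1 - (\<mu> + \<epsilon>)) / (\<mu> * (1 - \<mu>) * (1 - lam)\<^sup>2)) + 1))) powr (1 - (\<mu> + \<epsilon>))) ^ Suc m"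
      unfolding B n by (subst P2(3)) (simp only: e1 e2)
    show ?thesis
    proof
      show "prob_Sn_ge lam \<mu> n (real n * (\<mu> + \<epsilon>)) \<le> B" unfolding B' n by (rule P2(1))
      have "B \<le> exp (- 2 * ((1 - lam) / (1 + lam)) * \<epsilon>\<^sup>2) ^ Suc m"
        unfolding B' by (rule power_mono[OF P2(2) P2(4)])
      also have "\<dots> = exp (- 2 * ((1 - lam) / (1 + lam)) * real n * \<epsilon>\<^sup>2)"
        unfolding n exp_of_nat_mult[symmetric] by (simp add: mult_ac)
      finally show "B \<le> exp (- 2 * ((1 - lam) / (1 + lam)) * real n * \<epsilon>\<^sup>2)" .
    qed
  qed
  show ?thesis
  proof
    show "prob_Sn_ge lam \<mu> n (real n * (\<mu> + \<epsilon>))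
           \<le> (norm (Dmat t *v gamma1 \<mu>))\<^sup>2 / theta lam \<mu> t
              * exp (- real n * (t * (\<mu> + \<epsilon>) - ln (theta lam \<mu> t)))"
      using part1 unfolding a_def T_def .
    show "0 \<le> lam \<longrightarrow> (let \<mu>b = 1 - \<mu>;
                \<Delta> = 1 + 4 * lam * (\<mu> + \<epsilon>) * (\<mu>b - \<epsilon>) / (\<mu> * \<mu>b * (1 - lam)\<^sup>2);
                B = ((\<mu> + \<mu>b * lam) / (1 - 2 * (\<mu>b - \<epsilon>) / (sqrt \<Delta> + 1)))
                      powr (real n * (\<mu> + \<epsilon>))
                  * ((\<mu>b + \<mu> * lam) / (1 - 2 * (\<mu> + \<epsilon>) / (sqrt \<Delta> + 1)))
                      powr (real n * (\<mu>b - \<epsilon>))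
            in prob_Sn_ge lam \<mu> n (real n * (\<mu> + \<epsilon>)) \<le> B
               \<and> B \<le> exp (- 2 * ((1 - lam) / (1 + lam)) * real n * \<epsilon>\<^sup>2))"
      unfolding Let_def using part2' by blast
  qed
qed

end
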